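(* Let $p$ be a prime, $\mathbb{K}$ a finite extension of $\mathbb{Q}_p$ of degree $n$ (with the unique extension of the $p$-adic norm), and $G$ a topological group. Then $EH^2_{cb}(G, \mathbb{K}) \cong EH^2_{cb}(G, \mathbb{Q}_p)^n$ (as $\mathbb{Q}_p$-vector spaces). In particular, $EH^2_{cb}(G, \mathbb{K}) = 0$ if and only if $EH^2_{cb}(G, \mathbb{Q}_p) = 0$.
   Context: For a valued field $\mathbb{L}$, a quasimorphism $G\to\mathbb{L}$ is a continuous map $f$ with $\sup_{g,h}|f(gh)-f(g)-f(h)|<\infty$. The exact second continuous bounded cohomology is $EH^2_{cb}(G,\mathbb{L})=Q(G,\mathbb{L})/(\mathrm{Hom}_c(G,\mathbb{L})+C_b(G,\mathbb{L}))$, where $Q$ is the space of quasimorphisms, $\mathrm{Hom}_c$ continuous homomorphisms and $C_b$ continuous bounded functions; equivalently, the kernel of the comparison map $H^2_{cb}(G,\mathbb{L})\to H^2_c(G,\mathbb{L})$ with trivial coefficients. *)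

theory Defs
  imports "HOL-Analysis.Analysis" "HOL-Computational_Algebra.Primes" "HOL-Algebra.Group"
begin

definition absval :: "('a::field \<Rightarrow> real) \<Rightarrow> bool" where
  "absval av \<longleftrightarrow> av 0 = 0 \<and> (\<forall>x. x \<noteq> 0 \<longrightarrow> av x > 0)
     \<and> (\<forall>x y. av (x * y) = av x * av y) \<and> (\<forall>x y. av (x + y) \<le> av x + av y)"

definition padic_val_rat :: "nat \<Rightarrow> rat \<Rightarrow> int" where
  "padic_val_rat p r = (case quotient_of r of (a, b) \<Rightarrow>
      int (multiplicity (int p) a) - int (multiplicity (int p) b))"

definition padic_abs_rat :: "nat \<Rightarrow> rat \<Rightarrow> real" where
  "padic_abs_rat p r = (if r = 0 then 0 else real p powr (- real_of_int (padic_val_rat p r)))"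

text \<open>A field with absolute value is (a copy of) Q_p iff it is the completion of
  Q with respect to the p-adic absolute value: the absolute value extends the
  p-adic one on Q, Q is dense, and the field is complete.\<close>
definition is_Qp :: "nat \<Rightarrow> ('q::field_char_0 \<Rightarrow> real) \<Rightarrow> bool" where
  "is_Qp p av \<longleftrightarrow> absval av
     \<and> (\<forall>r. av (of_rat r) = padic_abs_rat p r)
     \<and> (\<forall>x e. e > 0 \<longrightarrow> (\<exists>r. av (x - of_rat r) < e))
     \<and> (\<forall>X::nat \<Rightarrow> 'q. (\<forall>e>0. \<exists>N. \<forall>m\<ge>N. \<forall>k\<ge>N. av (X m - X k) < e)
           \<longrightarrow> (\<exists>L. \<forall>e>0. \<exists>N. \<forall>m\<ge>N. av (X m - L) < e))"

definition abs_topology :: "('a::field \<Rightarrow> real) \<Rightarrow> 'a topology" where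
  "abs_topology av = topology (\<lambda>U. \<forall>x\<in>U. \<exists>e>0. \<forall>y. av (y - x) < e \<longrightarrow> y \<in> U)"

definition topological_group :: "('g, 'b) monoid_scheme \<Rightarrow> 'g topology \<Rightarrow> bool" where
  "topological_group G T \<longleftrightarrow> group G \<and> topspace T = carrier G
     \<and> continuous_map (prod_topology T T) T (\<lambda>(x, y). x \<otimes>\<^bsub>G\<^esub> y)
     \<and> continuous_map T T (\<lambda>x. inv\<^bsub>G\<^esub> x)"

text \<open>Functions on G are represented as functions on the ambient type vanishing
  outside the carrier.\<close>
definition QM :: "('g, 'b) monoid_scheme \<Rightarrow> 'g topology \<Rightarrow> ('a::field \<Rightarrow> real) \<Rightarrow> ('g \<Rightarrow> 'a) set" where
  "QM G T av = {f. continuous_map T (abs_topology av) f \<and> (\<forall>x. x \<notin> carrier G \<longrightarrow> f x = 0)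
     \<and> (\<exists>C. \<forall>g\<in>carrier G. \<forall>h\<in>carrier G. av (f (g \<otimes>\<^bsub>G\<^esub> h) - f g - f h) \<le> C)}"

definition HOMc :: "('g, 'b) monoid_scheme \<Rightarrow> 'g topology \<Rightarrow> ('a::field \<Rightarrow> real) \<Rightarrow> ('g \<Rightarrow> 'a) set" where
  "HOMc G T av = {f. continuous_map T (abs_topology av) f \<and> (\<forall>x. x \<notin> carrier G \<longrightarrow> f x = 0)
     \<and> (\<forall>g\<in>carrier G. \<forall>h\<in>carrier G. f (g \<otimes>\<^bsub>G\<^esub> h) = f g + f h)}"

definition CB :: "('g, 'b) monoid_scheme \<Rightarrow> 'g topology \<Rightarrow> ('a::field \<Rightarrow> real) \<Rightarrow> ('g \<Rightarrow> 'a) set" where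
  "CB G T av = {f. continuous_map T (abs_topology av) f \<and> (\<forall>x. x \<notin> carrier G \<longrightarrow> f x = 0)
     \<and> (\<exists>C. \<forall>g\<in>carrier G. av (f g) \<le> C)}"

definition HB :: "('g, 'b) monoid_scheme \<Rightarrow> 'g topology \<Rightarrow> ('a::field \<Rightarrow> real) \<Rightarrow> ('g \<Rightarrow> 'a) set" where
  "HB G T av = {(\<lambda>x. h x + b x) | h b. h \<in> HOMc G T av \<and> b \<in> CB G T av}"

definition EHcls :: "('g, 'b) monoid_scheme \<Rightarrow> 'g topology \<Rightarrow> ('a::field \<Rightarrow> real) \<Rightarrow> ('g \<Rightarrow> 'a) \<Rightarrow> ('g \<Rightarrow> 'a) set" where
  "EHcls G T av f = {g \<in> QM G T av. (\<lambda>x. g x - f x) \<in> HB G T av}"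

definition EH2cb :: "('g, 'b) monoid_scheme \<Rightarrow> 'g topology \<Rightarrow> ('a::field \<Rightarrow> real) \<Rightarrow> ('g \<Rightarrow> 'a) set set" where
  "EH2cb G T av = EHcls G T av ` QM G T av"

end

theory Submission
  imports Defs
begin


section \<open>Absolute values\<close>

lemma av0: "absval av \<Longrightarrow> av 0 = 0" by (simp add: absval_def)
lemma av_nonneg: "absval av \<Longrightarrow> av x \<ge> 0"
  unfolding absval_def by (cases "x = 0") (auto intro: less_imp_le)
lemma av_mult: "absval av \<Longrightarrow> av (x * y) = av x * av y" by (simp add: absval_def)
lemma av_tri: "absval av \<Longrightarrow> av (x + y) \<le> av x + av y" by (simp add: absval_def)
lemma av_eq0: "absval av \<Longrightarrow> av x = 0 \<longleftrightarrow> x = 0"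
  unfolding absval_def by (cases "x = 0") auto
lemma av1: "absval av \<Longrightarrow> av 1 = 1"
proof -
  assume a: "absval av"
  have "av 1 = av 1 * av 1" using av_mult[OF a, of 1 1] by simp
  moreover have "av 1 > 0" using a unfolding absval_def by simp
  ultimately show ?thesis by simp
qed
lemma av_minus: "absval av \<Longrightarrow> av (- x) = av x"
proof -
  assume a: "absval av"
  have "av (-1) * av (-1) = 1" using av_mult[OF a, of "-1" "-1"] av1[OF a] by simp
  moreover have "av (-1) \<ge> 0" using av_nonneg[OF a] .
  ultimately have "av (-1) = 1"
    by (metis abs_of_nonneg abs_square_eq_1 power2_eq_square)
  then show ?thesis using av_mult[OF a, of "-1" x] by simp
qed
lemma av_diff_commute: "absval av \<Longrightarrow> av (x - y) = av (y - x)"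
  by (metis av_minus minus_diff_eq)
lemma av_tri_diff: "absval av \<Longrightarrow> av (x - z) \<le> av (x - y) + av (y - z)"
  using av_tri[of av "x - y" "y - z"] by simp
lemma av_inverse: "absval av \<Longrightarrow> av (inverse x) = inverse (av x)"
proof (cases "x = 0")
  case True then show "absval av \<Longrightarrow> ?thesis" by (simp add: av0)
next
  case False
  assume a: "absval av"
  have "av x * av (inverse x) = 1" using av_mult[OF a, of x "inverse x"] av1[OF a] False by simp
  then have "inverse (av x) = av (inverse x)" by (rule inverse_unique)
  then show ?thesis by simp
qed
lemma av_sum: "absval av \<Longrightarrow> av (\<Sum>i\<in>I. f i) \<le> (\<Sum>i\<in>I. av (f i))"
proof (induction I rule: infinite_finite_induct)
  case (infinite A) then show ?case by (simp add: av0)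
next
  case empty then show ?case by (simp add: av0)
next
  case (insert x F)
  then show ?case using av_tri[of av "f x" "sum f F"] by simp
qed

section \<open>Topology\<close>

lemma istop_abs:
  fixes av :: "'a::field \<Rightarrow> real"
  shows "istopology (\<lambda>U. \<forall>x\<in>U. \<exists>e>0. \<forall>y. av (y - x) < e \<longrightarrow> y \<in> U)"
  unfolding istopology_def
proof (intro conjI allI impI)
  fix S T :: "'a set"
  assume S: "\<forall>x\<in>S. \<exists>e>0. \<forall>y. av (y - x) < e \<longrightarrow> y \<in> S"
    and T: "\<forall>x\<in>T. \<exists>e>0. \<forall>y. av (y - x) < e \<longrightarrow> y \<in> T"
  show "\<forall>x\<in>S \<inter> T. \<exists>e>0. \<forall>y. av (y - x) < e \<longrightarrow> y \<in> S \<inter> T"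
  proof
    fix x assume "x \<in> S \<inter> T"
    then obtain e1 e2 where "e1 > 0" "e2 > 0" "\<forall>y. av (y - x) < e1 \<longrightarrow> y \<in> S"
      "\<forall>y. av (y - x) < e2 \<longrightarrow> y \<in> T" using S T by blast
    then show "\<exists>e>0. \<forall>y. av (y - x) < e \<longrightarrow> y \<in> S \<inter> T"
      by (intro exI[of _ "min e1 e2"]) auto
  qed
next
  fix KK :: "'a set set"
  assume KK: "\<forall>W\<in>KK. \<forall>x\<in>W. \<exists>e>0. \<forall>y. av (y - x) < e \<longrightarrow> y \<in> W"
  show "\<forall>x\<in>\<Union> KK. \<exists>e>0. \<forall>y. av (y - x) < e \<longrightarrow> y \<in> \<Union> KK"
  proof
    fix x assume "x \<in> \<Union> KK"
    then obtain W where W: "W \<in> KK" "x \<in> W" by blast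
    then obtain e where e: "e > 0" "\<forall>y. av (y - x) < e \<longrightarrow> y \<in> W" using KK by blast
    show "\<exists>e>0. \<forall>y. av (y - x) < e \<longrightarrow> y \<in> \<Union> KK"
    proof (intro exI[of _ e] conjI allI impI)
      show "e > 0" by (rule e(1))
      fix y assume "av (y - x) < e"
      then have "y \<in> W" using e(2) by blast
      then show "y \<in> \<Union> KK" using W(1) by blast
    qed
  qed
qed

lemma openin_abs: "openin (abs_topology av) U \<longleftrightarrow> (\<forall>x\<in>U. \<exists>e>0. \<forall>y. av (y - x) < e \<longrightarrow> y \<in> U)"
  unfolding abs_topology_def using istop_abs[of av] by simp

lemma topspace_abs [simp]: "topspace (abs_topology av) = UNIV"
proof -
  have "openin (abs_topology av) UNIV" unfolding openin_abs by (auto intro!: exI[of _ "1::real"])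
  then show ?thesis using openin_subset by blast
qed

lemma cont_iff:
  assumes a: "absval av"
  shows "continuous_map T (abs_topology av) f \<longleftrightarrow>
    (\<forall>x0\<in>topspace T. \<forall>e>0. \<exists>V. openin T V \<and> x0 \<in> V \<and> (\<forall>x\<in>V. av (f x - f x0) < e))"
proof
  assume c: "continuous_map T (abs_topology av) f"
  show "\<forall>x0\<in>topspace T. \<forall>e>0. \<exists>V. openin T V \<and> x0 \<in> V \<and> (\<forall>x\<in>V. av (f x - f x0) < e)"
  proof (intro ballI allI impI)
    fix x0 e assume x0: "x0 \<in> topspace T" and e: "(e::real) > 0"
    define U where "U = {y. av (y - f x0) < e}"
    have "openin (abs_topology av) U"
      unfolding openin_abs U_def
    proof (intro ballI)
      fix y assume "y \<in> {y. av (y - f x0) < e}"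
      then have y: "av (y - f x0) < e" by simp
      show "\<exists>e'>0. \<forall>z. av (z - y) < e' \<longrightarrow> z \<in> {y. av (y - f x0) < e}"
      proof (intro exI[of _ "e - av (y - f x0)"] conjI allI impI)
        show "e - av (y - f x0) > 0" using y by simp
        fix z assume "av (z - y) < e - av (y - f x0)"
        then show "z \<in> {y. av (y - f x0) < e}" using av_tri_diff[OF a, of z "f x0" y] by simp
      qed
    qed
    then have "openin T {x \<in> topspace T. f x \<in> U}" using c unfolding continuous_map_def by blast
    moreover have "x0 \<in> {x \<in> topspace T. f x \<in> U}" using x0 e a by (simp add: U_def av0)
    ultimately show "\<exists>V. openin T V \<and> x0 \<in> V \<and> (\<forall>x\<in>V. av (f x - f x0) < e)"
      by (intro exI[of _ "{x \<in> topspace T. f x \<in> U}"]) (auto simp: U_def)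
  qed
next
  assume r: "\<forall>x0\<in>topspace T. \<forall>e>0. \<exists>V. openin T V \<and> x0 \<in> V \<and> (\<forall>x\<in>V. av (f x - f x0) < e)"
  show "continuous_map T (abs_topology av) f"
    unfolding continuous_map_def
  proof (intro conjI allI impI)
    show "f \<in> topspace T \<rightarrow> topspace (abs_topology av)" by simp
    fix U assume U: "openin (abs_topology av) U"
    show "openin T {x \<in> topspace T. f x \<in> U}"
    proof (rule openin_subopen[THEN iffD2], intro ballI)
      fix x0 assume x0: "x0 \<in> {x \<in> topspace T. f x \<in> U}"
      have x0t: "x0 \<in> topspace T" and fx0: "f x0 \<in> U" using x0 by auto
      obtain e where e: "e > 0" "\<forall>y. av (y - f x0) < e \<longrightarrow> y \<in> U"
        using U fx0 unfolding openin_abs by blast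
      obtain V where V: "openin T V" "x0 \<in> V" "\<forall>x\<in>V. av (f x - f x0) < e"
        using r[rule_format, OF x0t e(1)] by blast
      have "V \<subseteq> {x \<in> topspace T. f x \<in> U}"
      proof
        fix x assume x: "x \<in> V"
        have "x \<in> topspace T" using openin_subset[OF V(1)] x by blast
        moreover have "f x \<in> U" using e(2) V(3) x by blast
        ultimately show "x \<in> {x \<in> topspace T. f x \<in> U}" by simp
      qed
      then show "\<exists>Ta. openin T Ta \<and> x0 \<in> Ta \<and> Ta \<subseteq> {x \<in> topspace T. f x \<in> U}"
        using V by blast
    qed
  qed
qed

lemma cont_const: "continuous_map T (abs_topology av) (\<lambda>x. k)"
  by simp

lemma cont_add:
  assumes a: "absval av" and u: "continuous_map T (abs_topology av) u"
    and v: "continuous_map T (abs_topology av) v"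
  shows "continuous_map T (abs_topology av) (\<lambda>x. u x + v x)"
  unfolding cont_iff[OF a]
proof (intro ballI allI impI)
  fix x0 e assume x0: "x0 \<in> topspace T" and e: "(e::real) > 0"
  obtain V1 where V1: "openin T V1" "x0 \<in> V1" "\<forall>x\<in>V1. av (u x - u x0) < e/2"
    using u[unfolded cont_iff[OF a]] x0 e by (meson half_gt_zero)
  obtain V2 where V2: "openin T V2" "x0 \<in> V2" "\<forall>x\<in>V2. av (v x - v x0) < e/2"
    using v[unfolded cont_iff[OF a]] x0 e by (meson half_gt_zero)
  show "\<exists>V. openin T V \<and> x0 \<in> V \<and> (\<forall>x\<in>V. av (u x + v x - (u x0 + v x0)) < e)"
  proof (intro exI[of _ "V1 \<inter> V2"] conjI ballI)
    show "openin T (V1 \<inter> V2)" using V1 V2 by auto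
    show "x0 \<in> V1 \<inter> V2" using V1 V2 by auto
    fix x assume x: "x \<in> V1 \<inter> V2"
    have "av (u x + v x - (u x0 + v x0)) \<le> av (u x - u x0) + av (v x - v x0)"
      using av_tri[OF a, of "u x - u x0" "v x - v x0"] by (simp add: algebra_simps)
    then show "av (u x + v x - (u x0 + v x0)) < e" using x V1 V2 by fastforce
  qed
qed

lemma cont_cmul:
  assumes a: "absval av" and u: "continuous_map T (abs_topology av) u"
  shows "continuous_map T (abs_topology av) (\<lambda>x. k * u x)"
  unfolding cont_iff[OF a]
proof (intro ballI allI impI)
  fix x0 e assume x0: "x0 \<in> topspace T" and e: "(e::real) > 0"
  have k: "av k \<ge> 0" using av_nonneg[OF a] .
  have e': "e / (av k + 1) > 0" using e k by simp
  obtain V where V: "openin T V" "x0 \<in> V" "\<forall>x\<in>V. av (u x - u x0) < e / (av k + 1)"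
    using u[unfolded cont_iff[OF a]] x0 e' by meson
  show "\<exists>V. openin T V \<and> x0 \<in> V \<and> (\<forall>x\<in>V. av (k * u x - k * u x0) < e)"
  proof (intro exI[of _ V] conjI ballI)
    show "openin T V" "x0 \<in> V" using V by auto
    fix x assume x: "x \<in> V"
    have "av (k * u x - k * u x0) = av k * av (u x - u x0)"
      using av_mult[OF a, of k "u x - u x0"] by (simp add: algebra_simps)
    also have "\<dots> \<le> (av k + 1) * av (u x - u x0)"
      using av_nonneg[OF a, of "u x - u x0"] by (simp add: mult_right_mono)
    also have "\<dots> < (av k + 1) * (e / (av k + 1))"
      using V x k by (intro mult_strict_left_mono) auto
    also have "\<dots> = e" using k by simp
    finally show "av (k * u x - k * u x0) < e" .
  qed
qed

lemma cont_sum: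
  assumes a: "absval av"
  shows "finite I \<Longrightarrow> (\<forall>i\<in>I. continuous_map T (abs_topology av) (u i)) \<Longrightarrow>
    continuous_map T (abs_topology av) (\<lambda>x. \<Sum>i\<in>I. u i x)"
proof (induction I rule: finite_induct)
  case empty then show ?case by simp
next
  case (insert y F)
  then show ?case using cont_add[OF a, of T "u y" "\<lambda>x. \<Sum>i\<in>F. u i x"] by simp
qed



locale extctx =
  fixes A :: "'q::field \<Rightarrow> real" and B :: "'k::field \<Rightarrow> real"
    and \<iota> :: "'q \<Rightarrow> 'k" and bs :: "nat \<Rightarrow> 'k" and n :: nat
  assumes A: "absval A" and B: "absval B"
    and iadd: "\<And>a b. \<iota> (a + b) = \<iota> a + \<iota> b"
    and imult: "\<And>a b. \<iota> (a * b) = \<iota> a * \<iota> b"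
    and ione: "\<iota> 1 = 1"
    and BA: "\<And>c. B (\<iota> c) = A c"
    and basis: "\<And>x. \<exists>!c. c \<in> {..<n} \<rightarrow>\<^sub>E UNIV \<and> x = (\<Sum>i<n. \<iota> (c i) * bs i)"
    and complete: "\<And>X::nat \<Rightarrow> 'q. (\<forall>e>0. \<exists>N. \<forall>m\<ge>N. \<forall>k\<ge>N. A (X m - X k) < e) \<Longrightarrow>
         (\<exists>L. \<forall>e>0. \<exists>N. \<forall>m\<ge>N. A (X m - L) < e)"
begin

lemma izero [simp]: "\<iota> 0 = 0" using iadd[of 0 0] by (metis add.right_neutral add_left_cancel)
lemma iminus: "\<iota> (- a) = - \<iota> a"
proof -
  have "\<iota> a + \<iota> (- a) = 0" using iadd[of a "-a"] by simp
  then show ?thesis by (metis neg_eq_iff_add_eq_0)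
qed
lemma idiff: "\<iota> (a - b) = \<iota> a - \<iota> b" using iadd[of a "-b"] iminus[of b] by simp

definition coord :: "'k \<Rightarrow> nat \<Rightarrow> 'q" where
  "coord x = (THE c. c \<in> {..<n} \<rightarrow>\<^sub>E UNIV \<and> x = (\<Sum>i<n. \<iota> (c i) * bs i))"

lemma coord_prop: "coord x \<in> {..<n} \<rightarrow>\<^sub>E UNIV \<and> x = (\<Sum>i<n. \<iota> (coord x i) * bs i)"
  unfolding coord_def by (rule theI'[OF basis])

lemma coord_rep: "(\<Sum>i<n. \<iota> (coord x i) * bs i) = x" using coord_prop by metis

lemma coord_of_sum: "j < n \<Longrightarrow> coord (\<Sum>i<n. \<iota> (u i) * bs i) j = u j"
proof -
  assume j: "j < n"
  let ?x = "\<Sum>i<n. \<iota> (u i) * bs i"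
  have r: "restrict u {..<n} \<in> {..<n} \<rightarrow>\<^sub>E UNIV" by simp
  have e: "?x = (\<Sum>i<n. \<iota> (restrict u {..<n} i) * bs i)" by (intro sum.cong) auto
  have "coord ?x = restrict u {..<n}"
    unfolding coord_def by (rule the1_equality[OF basis]) (use r e in blast)
  then show ?thesis using j by simp
qed

lemma coord_zero: "j < n \<Longrightarrow> coord 0 j = 0"
  using coord_of_sum[of j "\<lambda>i. 0"] by simp

lemma coord_lin: "j < n \<Longrightarrow> coord (\<iota> a * x + y) j = a * coord x j + coord y j"
proof -
  assume j: "j < n"
  have "(\<Sum>i<n. \<iota> (a * coord x i + coord y i) * bs i)
      = \<iota> a * (\<Sum>i<n. \<iota> (coord x i) * bs i) + (\<Sum>i<n. \<iota> (coord y i) * bs i)"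
    by (simp add: iadd imult sum_distrib_left sum.distrib algebra_simps)
  also have "\<dots> = \<iota> a * x + y" by (simp add: coord_rep)
  finally have "\<iota> a * x + y = (\<Sum>i<n. \<iota> (a * coord x i + coord y i) * bs i)" by simp
  then show ?thesis using coord_of_sum[OF j, of "\<lambda>i. a * coord x i + coord y i"] by simp
qed

lemma coord_add: "j < n \<Longrightarrow> coord (x + y) j = coord x j + coord y j"
  using coord_lin[of j 1 x y] by (simp add: ione)

lemma coord_diff: "j < n \<Longrightarrow> coord (x - y) j = coord x j - coord y j"
proof -
  assume j: "j < n"
  have "\<iota> (-1) * y + x = x - y" by (simp add: iminus ione)
  then show ?thesis using coord_lin[OF j, of "-1" y x] by simp
qed

lemma upper: "B (\<Sum>i\<in>I. \<iota> (e i) * bs i) \<le> (\<Sum>i\<in>I. A (e i) * B (bs i))"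
proof -
  have "B (\<Sum>i\<in>I. \<iota> (e i) * bs i) \<le> (\<Sum>i\<in>I. B (\<iota> (e i) * bs i))" by (rule av_sum[OF B])
  also have "\<dots> = (\<Sum>i\<in>I. A (e i) * B (bs i))" by (simp add: av_mult[OF B] BA)
  finally show ?thesis .
qed

lemma lin_indep:
  assumes S: "S \<subseteq> {..<n}" and z: "(\<Sum>i\<in>S. \<iota> (c i) * bs i) = 0" and j: "j \<in> S"
  shows "c j = 0"
proof -
  define c' where "c' i = (if i \<in> S then c i else 0)" for i
  have "(\<Sum>i<n. \<iota> (c' i) * bs i) = (\<Sum>i\<in>S. \<iota> (c' i) * bs i)"
    by (rule sum.mono_neutral_right) (use S in \<open>auto simp: c'_def\<close>)
  also have "\<dots> = (\<Sum>i\<in>S. \<iota> (c i) * bs i)" by (intro sum.cong) (auto simp: c'_def)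
  finally have "(\<Sum>i<n. \<iota> (c' i) * bs i) = 0" using z by simp
  moreover have "j < n" using S j by auto
  ultimately have "c' j = coord 0 j" using coord_of_sum[of j c'] by simp
  then show ?thesis using coord_zero \<open>j < n\<close> j by (simp add: c'_def)
qed

lemma bound_sub:
  assumes "finite S" "S \<subseteq> {..<n}"
  shows "\<exists>C. \<forall>c. \<forall>j\<in>S. A (c j) \<le> C * B (\<Sum>i\<in>S. \<iota> (c i) * bs i)"
  using assms
proof (induction S rule: finite_psubset_induct)
  case (psubset S)
  have finS: "finite S" by (rule psubset.hyps)
  have "\<forall>j\<in>S. \<exists>C. \<forall>c. A (c j) \<le> C * B (\<Sum>i\<in>S. \<iota> (c i) * bs i)"
  proof
    fix j assume j: "j \<in> S"
    define S' where "S' = S - {j}"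
    have "S' \<subset> S" "S' \<subseteq> {..<n}" using j psubset.prems unfolding S'_def by auto
    then obtain C' where C': "\<forall>c. \<forall>i\<in>S'. A (c i) \<le> C' * B (\<Sum>i\<in>S'. \<iota> (c i) * bs i)"
      using psubset.IH by blast
    define D where "D = max C' 0 + 1"
    have D: "D > 0" unfolding D_def by simp
    have CD: "A (c i) \<le> D * B (\<Sum>i\<in>S'. \<iota> (c i) * bs i)" if "i \<in> S'" for c i
    proof -
      have "A (c i) \<le> C' * B (\<Sum>i\<in>S'. \<iota> (c i) * bs i)" using C' that by blast
      also have "\<dots> \<le> D * B (\<Sum>i\<in>S'. \<iota> (c i) * bs i)"
        unfolding D_def by (intro mult_right_mono) (auto simp: av_nonneg[OF B])
      finally show ?thesis .
    qed
    let ?v = "\<lambda>c. \<Sum>i\<in>S. \<iota> (c i) * bs i"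
    show "\<exists>C. \<forall>c. A (c j) \<le> C * B (?v c)"
    proof (rule ccontr)
      assume nb: "\<not> (\<exists>C. \<forall>c. A (c j) \<le> C * B (?v c))"
      have "\<forall>k::nat. \<exists>c. A (c j) > real (Suc k) * B (?v c)"
        using nb by (meson not_le)
      then obtain c where c: "\<And>k. A (c k j) > real (Suc k) * B (?v (c k))"
        using choice[of "\<lambda>k c. A (c j) > real (Suc k) * B (?v c)"] by blast
      have Apos: "A (c k j) > 0" for k
      proof -
        have "real (Suc k) * B (?v (c k)) \<ge> 0" using av_nonneg[OF B] by simp
        then show ?thesis using c[of k] by linarith
      qed
      have cj: "c k j \<noteq> 0" for k using Apos[of k] av0[OF A] by auto
      define d where "d k i = c k i / c k j" for k i
      have dj: "d k j = 1" for k using cj unfolding d_def by simp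
      have Bd: "B (?v (d k)) < inverse (real (Suc k))" for k
      proof -
        have "?v (d k) = (\<Sum>i\<in>S. \<iota> (inverse (c k j)) * (\<iota> (c k i) * bs i))"
          by (intro sum.cong) (auto simp: d_def divide_inverse imult mult.commute mult.left_commute)
        also have "\<dots> = \<iota> (inverse (c k j)) * ?v (c k)" by (simp add: sum_distrib_left)
        finally have "B (?v (d k)) = inverse (A (c k j)) * B (?v (c k))"
          using av_mult[OF B] BA av_inverse[OF A] by simp
        also have "\<dots> < inverse (real (Suc k))"
          using c[of k] Apos[of k] by (simp add: field_simps)
        finally show ?thesis .
      qed
      have vdiff: "(\<Sum>i\<in>S'. \<iota> (d m i - d k i) * bs i) = ?v (d m) - ?v (d k)" for m k
      proof -
        have "?v (d m) - ?v (d k) = (\<Sum>i\<in>S. \<iota> (d m i - d k i) * bs i)"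
          by (simp add: sum_subtractf[symmetric] idiff algebra_simps)
        also have "\<dots> = \<iota> (d m j - d k j) * bs j + (\<Sum>i\<in>S'. \<iota> (d m i - d k i) * bs i)"
          unfolding S'_def using finS j by (simp add: sum.remove)
        also have "\<dots> = (\<Sum>i\<in>S'. \<iota> (d m i - d k i) * bs i)" using dj by simp
        finally show ?thesis by simp
      qed
      have cauchy: "\<forall>e>0. \<exists>N. \<forall>m\<ge>N. \<forall>k\<ge>N. A (d m i - d k i) < e" if i: "i \<in> S'" for i
      proof (intro allI impI)
        fix e :: real assume e: "e > 0"
        obtain N where N: "inverse (real (Suc N)) < e / (2 * D)"
          using reals_Archimedean[of "e/(2*D)"] e D by auto
        show "\<exists>N. \<forall>m\<ge>N. \<forall>k\<ge>N. A (d m i - d k i) < e"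
        proof (intro exI[of _ N] allI impI)
          fix m k assume mk: "m \<ge> N" "k \<ge> N"
          have im: "inverse (real (Suc m)) \<le> inverse (real (Suc N))"
            using mk by (intro le_imp_inverse_le) auto
          have ik: "inverse (real (Suc k)) \<le> inverse (real (Suc N))"
            using mk by (intro le_imp_inverse_le) auto
          have s: "B (?v (d m)) + B (?v (d k)) < 2 * inverse (real (Suc N))"
            using Bd[of m] Bd[of k] im ik by linarith
          have "A (d m i - d k i) \<le> D * B (\<Sum>i\<in>S'. \<iota> (d m i - d k i) * bs i)"
            using CD[OF i, of "\<lambda>i. d m i - d k i"] by simp
          also have "\<dots> = D * B (?v (d m) - ?v (d k))" by (simp only: vdiff)
          also have "\<dots> \<le> D * (B (?v (d m)) + B (?v (d k)))"
            using av_tri_diff[OF B, of "?v (d m)" "?v (d k)" 0] av_minus[OF B, of "?v (d k)"] D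
            by (intro mult_left_mono) auto
          also have "\<dots> < D * (2 * inverse (real (Suc N)))"
            by (rule mult_strict_left_mono[OF s D])
          also have "\<dots> < D * (2 * (e / (2 * D)))" using N D by (intro mult_strict_left_mono) auto
          also have "\<dots> = e" using D by simp
          finally show "A (d m i - d k i) < e" .
        qed
      qed
      have "\<forall>i\<in>S'. \<exists>L. \<forall>e>0. \<exists>N. \<forall>m\<ge>N. A (d m i - L) < e"
      proof
        fix i assume i: "i \<in> S'"
        show "\<exists>L. \<forall>e>0. \<exists>N. \<forall>m\<ge>N. A (d m i - L) < e"
          by (rule complete[of "\<lambda>m. d m i", OF cauchy[OF i]])
      qed
      then obtain L where L: "\<forall>i\<in>S'. \<forall>e>0. \<exists>N. \<forall>m\<ge>N. A (d m i - L i) < e"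
        using bchoice[of S' "\<lambda>i L. \<forall>e>0. \<exists>N. \<forall>m\<ge>N. A (d m i - L) < e"] by blast
      define di where "di i = (if i = j then 1 else L i)" for i
      have tends: "(\<lambda>k. A (di i - d k i)) \<longlonglongrightarrow> 0" if i: "i \<in> S'" for i
      proof (rule LIMSEQ_I)
        fix r :: real assume "r > 0"
        then obtain N where N: "\<forall>m\<ge>N. A (d m i - L i) < r" using L i by blast
        have "i \<noteq> j" using i S'_def by auto
        then have "A (di i - d k i) = A (d k i - L i)" for k
          by (simp add: di_def av_diff_commute[OF A, of "L i"])
        then show "\<exists>no. \<forall>k\<ge>no. norm (A (di i - d k i) - 0) < r"
          using N av_nonneg[OF A] by (intro exI[of _ N]) auto
      qed
      have bnd: "B (?v di) \<le> B (?v (d k)) + (\<Sum>i\<in>S'. A (di i - d k i) * B (bs i))" for k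
      proof -
        have "?v di - ?v (d k) = (\<Sum>i\<in>S. \<iota> (di i - d k i) * bs i)"
          by (simp add: sum_subtractf[symmetric] idiff algebra_simps)
        also have "\<dots> = \<iota> (di j - d k j) * bs j + (\<Sum>i\<in>S'. \<iota> (di i - d k i) * bs i)"
          unfolding S'_def using finS j by (simp add: sum.remove)
        also have "\<dots> = (\<Sum>i\<in>S'. \<iota> (di i - d k i) * bs i)" using dj by (simp add: di_def)
        finally have eq: "?v di = ?v (d k) + (\<Sum>i\<in>S'. \<iota> (di i - d k i) * bs i)"
          by (simp add: algebra_simps)
        have "B (?v di) \<le> B (?v (d k)) + B (\<Sum>i\<in>S'. \<iota> (di i - d k i) * bs i)"
          unfolding eq by (rule av_tri[OF B])
        also have "\<dots> \<le> B (?v (d k)) + (\<Sum>i\<in>S'. A (di i - d k i) * B (bs i))"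
          using upper by simp
        finally show ?thesis .
      qed
      have lim1: "(\<lambda>k. B (?v (d k))) \<longlonglongrightarrow> 0"
      proof -
        have e1: "eventually (\<lambda>k. (0::real) \<le> B (?v (d k))) sequentially"
          by (simp add: av_nonneg[OF B])
        have e2: "eventually (\<lambda>k. B (?v (d k)) \<le> inverse (real (Suc k))) sequentially"
          by (intro always_eventually allI) (rule less_imp_le[OF Bd])
        show ?thesis by (rule tendsto_sandwich[OF e1 e2 tendsto_const LIMSEQ_inverse_real_of_nat])
      qed
      have "(\<lambda>k. \<Sum>i\<in>S'. A (di i - d k i) * B (bs i)) \<longlonglongrightarrow> (\<Sum>i\<in>S'. 0)"
        by (intro tendsto_sum tendsto_mult_left_zero tends)
      then have lim2: "(\<lambda>k. \<Sum>i\<in>S'. A (di i - d k i) * B (bs i)) \<longlonglongrightarrow> 0" by simp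
      have lim: "(\<lambda>k. B (?v (d k)) + (\<Sum>i\<in>S'. A (di i - d k i) * B (bs i))) \<longlonglongrightarrow> 0"
        using tendsto_add[OF lim1 lim2] by simp
      have "B (?v di) \<le> 0" using LIMSEQ_le_const[OF lim] bnd by blast
      then have "?v di = 0" using av_nonneg[OF B, of "?v di"] av_eq0[OF B] by simp
      then have "di j = 0" using lin_indep[OF psubset.prems _ j] by blast
      then show False unfolding di_def by simp
    qed
  qed
  then obtain Cf where Cf: "\<forall>j\<in>S. \<forall>c. A (c j) \<le> Cf j * B (\<Sum>i\<in>S. \<iota> (c i) * bs i)"
    using bchoice[of S "\<lambda>j C. \<forall>c. A (c j) \<le> C * B (\<Sum>i\<in>S. \<iota> (c i) * bs i)"] by blast
  show ?case
  proof (intro exI[of _ "\<Sum>j\<in>S. max (Cf j) 0"] allI ballI)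
    fix c j assume j: "j \<in> S"
    have "A (c j) \<le> Cf j * B (\<Sum>i\<in>S. \<iota> (c i) * bs i)" using Cf j by blast
    also have "\<dots> \<le> (\<Sum>j\<in>S. max (Cf j) 0) * B (\<Sum>i\<in>S. \<iota> (c i) * bs i)"
    proof (rule mult_right_mono)
      have "Cf j \<le> max (Cf j) 0" by simp
      also have "\<dots> \<le> (\<Sum>j\<in>S. max (Cf j) 0)" using finS j by (intro member_le_sum) auto
      finally show "Cf j \<le> (\<Sum>j\<in>S. max (Cf j) 0)" .
    qed (simp add: av_nonneg[OF B])
    finally show "A (c j) \<le> (\<Sum>j\<in>S. max (Cf j) 0) * B (\<Sum>i\<in>S. \<iota> (c i) * bs i)" .
  qed
qed

lemma coord_bound: "\<exists>C\<ge>0. \<forall>x j. j < n \<longrightarrow> A (coord x j) \<le> C * B x"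
proof -
  obtain C where C: "\<forall>c. \<forall>j\<in>{..<n}. A (c j) \<le> C * B (\<Sum>i<n. \<iota> (c i) * bs i)"
    using bound_sub[of "{..<n}"] by auto
  show ?thesis
  proof (intro exI[of _ "max C 0"] conjI allI impI)
    fix x j assume j: "j < n"
    have "A (coord x j) \<le> C * B (\<Sum>i<n. \<iota> (coord x i) * bs i)" using C j by blast
    also have "\<dots> = C * B x" by (simp add: coord_rep)
    also have "\<dots> \<le> max C 0 * B x" by (intro mult_right_mono) (auto simp: av_nonneg[OF B])
    finally show "A (coord x j) \<le> max C 0 * B x" .
  qed simp
qed

end


section \<open>Closure properties\<close>

lemma QM_lin:
  assumes a: "absval av" and u: "u \<in> QM G T av" and v: "v \<in> QM G T av"
  shows "(\<lambda>x. k * u x + v x) \<in> QM G T av"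
proof -
  obtain C1 where C1: "\<forall>g\<in>carrier G. \<forall>h\<in>carrier G. av (u (g \<otimes>\<^bsub>G\<^esub> h) - u g - u h) \<le> C1"
    using u unfolding QM_def by blast
  obtain C2 where C2: "\<forall>g\<in>carrier G. \<forall>h\<in>carrier G. av (v (g \<otimes>\<^bsub>G\<^esub> h) - v g - v h) \<le> C2"
    using v unfolding QM_def by blast
  have c: "continuous_map T (abs_topology av) (\<lambda>x. k * u x + v x)"
    using u v unfolding QM_def by (intro cont_add[OF a] cont_cmul[OF a]) auto
  have z: "\<forall>x. x \<notin> carrier G \<longrightarrow> k * u x + v x = 0" using u v unfolding QM_def by auto
  have "\<forall>g\<in>carrier G. \<forall>h\<in>carrier G.
      av ((k * u (g \<otimes>\<^bsub>G\<^esub> h) + v (g \<otimes>\<^bsub>G\<^esub> h)) - (k * u g + v g) - (k * u h + v h)) \<le> av k * C1 + C2"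
  proof (intro ballI)
    fix g h assume g: "g \<in> carrier G" and h: "h \<in> carrier G"
    have "(k * u (g \<otimes>\<^bsub>G\<^esub> h) + v (g \<otimes>\<^bsub>G\<^esub> h)) - (k * u g + v g) - (k * u h + v h)
        = k * (u (g \<otimes>\<^bsub>G\<^esub> h) - u g - u h) + (v (g \<otimes>\<^bsub>G\<^esub> h) - v g - v h)"
      by (simp add: algebra_simps)
    then have "av ((k * u (g \<otimes>\<^bsub>G\<^esub> h) + v (g \<otimes>\<^bsub>G\<^esub> h)) - (k * u g + v g) - (k * u h + v h))
        = av (k * (u (g \<otimes>\<^bsub>G\<^esub> h) - u g - u h) + (v (g \<otimes>\<^bsub>G\<^esub> h) - v g - v h))" by (rule arg_cong[of _ _ av])
    also have "\<dots> \<le> av (k * (u (g \<otimes>\<^bsub>G\<^esub> h) - u g - u h)) + av (v (g \<otimes>\<^bsub>G\<^esub> h) - v g - v h)"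
      by (rule av_tri[OF a])
    also have "\<dots> = av k * av (u (g \<otimes>\<^bsub>G\<^esub> h) - u g - u h) + av (v (g \<otimes>\<^bsub>G\<^esub> h) - v g - v h)"
      by (simp add: av_mult[OF a])
    finally have "av ((k * u (g \<otimes>\<^bsub>G\<^esub> h) + v (g \<otimes>\<^bsub>G\<^esub> h)) - (k * u g + v g) - (k * u h + v h))
        \<le> av k * av (u (g \<otimes>\<^bsub>G\<^esub> h) - u g - u h) + av (v (g \<otimes>\<^bsub>G\<^esub> h) - v g - v h)" .
    also have "\<dots> \<le> av k * C1 + C2"
      using C1 C2 g h av_nonneg[OF a, of k] by (intro add_mono mult_left_mono) auto
    finally show "av ((k * u (g \<otimes>\<^bsub>G\<^esub> h) + v (g \<otimes>\<^bsub>G\<^esub> h)) - (k * u g + v g) - (k * u h + v h)) \<le> av k * C1 + C2" .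
  qed
  then show ?thesis using c z unfolding QM_def by blast
qed

lemma HOMc_lin:
  assumes a: "absval av" and u: "u \<in> HOMc G T av" and v: "v \<in> HOMc G T av"
  shows "(\<lambda>x. k * u x + v x) \<in> HOMc G T av"
proof -
  have c: "continuous_map T (abs_topology av) (\<lambda>x. k * u x + v x)"
    using u v unfolding HOMc_def by (intro cont_add[OF a] cont_cmul[OF a]) auto
  then show ?thesis using u v unfolding HOMc_def by (auto simp: algebra_simps)
qed

lemma CB_lin:
  assumes a: "absval av" and u: "u \<in> CB G T av" and v: "v \<in> CB G T av"
  shows "(\<lambda>x. k * u x + v x) \<in> CB G T av"
proof -
  obtain C1 where C1: "\<forall>g\<in>carrier G. av (u g) \<le> C1" using u unfolding CB_def by blast
  obtain C2 where C2: "\<forall>g\<in>carrier G. av (v g) \<le> C2" using v unfolding CB_def by blast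
  have c: "continuous_map T (abs_topology av) (\<lambda>x. k * u x + v x)"
    using u v unfolding CB_def by (intro cont_add[OF a] cont_cmul[OF a]) auto
  have z: "\<forall>x. x \<notin> carrier G \<longrightarrow> k * u x + v x = 0" using u v unfolding CB_def by auto
  have "\<forall>g\<in>carrier G. av (k * u g + v g) \<le> av k * C1 + C2"
  proof
    fix g assume g: "g \<in> carrier G"
    have "av (k * u g + v g) \<le> av (k * u g) + av (v g)" by (rule av_tri[OF a])
    also have "\<dots> = av k * av (u g) + av (v g)" by (simp add: av_mult[OF a])
    also have "\<dots> \<le> av k * C1 + C2"
      using C1 C2 g av_nonneg[OF a, of k] by (intro add_mono mult_left_mono) auto
    finally show "av (k * u g + v g) \<le> av k * C1 + C2" .
  qed
  then show ?thesis using c z unfolding CB_def by blast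
qed

lemma HOMc_zero: "(\<lambda>x. 0) \<in> HOMc G T av" unfolding HOMc_def by simp
lemma CB_zero: "(\<lambda>x. 0) \<in> CB G T av"
proof -
  have "\<exists>C. \<forall>g\<in>carrier G. av 0 \<le> C" by (rule exI[of _ "av 0"]) simp
  then show ?thesis unfolding CB_def by simp
qed
lemma QM_zero: "absval av \<Longrightarrow> (\<lambda>x. 0) \<in> QM G T av" unfolding QM_def by (auto simp: av0)

lemma HB_I: "h \<in> HOMc G T av \<Longrightarrow> b \<in> CB G T av \<Longrightarrow> (\<lambda>x. h x + b x) \<in> HB G T av"
  unfolding HB_def by blast

lemma HB_lin:
  assumes a: "absval av" and u: "u \<in> HB G T av" and v: "v \<in> HB G T av"
  shows "(\<lambda>x. k * u x + v x) \<in> HB G T av"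
proof -
  obtain h1 b1 where 1: "u = (\<lambda>x. h1 x + b1 x)" "h1 \<in> HOMc G T av" "b1 \<in> CB G T av"
    using u unfolding HB_def by blast
  obtain h2 b2 where 2: "v = (\<lambda>x. h2 x + b2 x)" "h2 \<in> HOMc G T av" "b2 \<in> CB G T av"
    using v unfolding HB_def by blast
  have eq: "(\<lambda>x. k * u x + v x) = (\<lambda>x. (k * h1 x + h2 x) + (k * b1 x + b2 x))"
    using 1 2 by (auto simp: algebra_simps)
  have h: "(\<lambda>x. k * h1 x + h2 x) \<in> HOMc G T av" using HOMc_lin[OF a 1(2) 2(2)] .
  have b: "(\<lambda>x. k * b1 x + b2 x) \<in> CB G T av" using CB_lin[OF a 1(3) 2(3)] .
  show ?thesis unfolding eq by (rule HB_I[OF h b])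
qed

lemma HB_zero: "(\<lambda>x. 0) \<in> HB G T av"
  using HB_I[OF HOMc_zero CB_zero] by simp

lemma HB_diff:
  assumes a: "absval av" and u: "u \<in> HB G T av" and v: "v \<in> HB G T av"
  shows "(\<lambda>x. u x - v x) \<in> HB G T av"
  using HB_lin[OF a v u, of "-1"] by simp

lemma cls_self: "absval av \<Longrightarrow> f \<in> QM G T av \<Longrightarrow> f \<in> EHcls G T av f"
  unfolding EHcls_def using HB_zero by simp

lemma cls_eq_iff:
  assumes a: "absval av" and f: "f \<in> QM G T av" and g: "g \<in> QM G T av"
  shows "EHcls G T av f = EHcls G T av g \<longleftrightarrow> (\<lambda>x. g x - f x) \<in> HB G T av"
proof
  assume "EHcls G T av f = EHcls G T av g"
  then have "g \<in> EHcls G T av f" using cls_self[OF a g] by simp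
  then show "(\<lambda>x. g x - f x) \<in> HB G T av" unfolding EHcls_def by simp
next
  assume gf: "(\<lambda>x. g x - f x) \<in> HB G T av"
  show "EHcls G T av f = EHcls G T av g"
  proof (intro Set.set_eqI iffI)
    fix h assume "h \<in> EHcls G T av f"
    then have h: "h \<in> QM G T av" "(\<lambda>x. h x - f x) \<in> HB G T av" unfolding EHcls_def by auto
    have "(\<lambda>x. (h x - f x) - (g x - f x)) \<in> HB G T av" by (rule HB_diff[OF a h(2) gf])
    then show "h \<in> EHcls G T av g" using h unfolding EHcls_def by simp
  next
    fix h assume "h \<in> EHcls G T av g"
    then have h: "h \<in> QM G T av" "(\<lambda>x. h x - g x) \<in> HB G T av" unfolding EHcls_def by auto
    have "(\<lambda>x. 1 * (h x - g x) + (g x - f x)) \<in> HB G T av" by (rule HB_lin[OF a h(2) gf])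
    then show "h \<in> EHcls G T av f" using h unfolding EHcls_def by simp
  qed
qed



context extctx
begin

lemma cont_iota:
  assumes u: "continuous_map T (abs_topology A) u"
  shows "continuous_map T (abs_topology B) (\<lambda>x. \<iota> (u x))"
  using u unfolding cont_iff[OF A] cont_iff[OF B] by (simp add: idiff[symmetric] BA)

lemma cont_coord:
  assumes f: "continuous_map T (abs_topology B) f" and j: "j < n"
  shows "continuous_map T (abs_topology A) (\<lambda>x. coord (f x) j)"
proof -
  obtain C where C: "C \<ge> 0" "\<forall>x j. j < n \<longrightarrow> A (coord x j) \<le> C * B x"
    using coord_bound by blast
  show ?thesis unfolding cont_iff[OF A]
  proof (intro ballI allI impI)
    fix x0 e assume x0: "x0 \<in> topspace T" and e: "(e::real) > 0"
    have e': "e / (C + 1) > 0" using e C by simp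
    obtain V where V: "openin T V" "x0 \<in> V" "\<forall>x\<in>V. B (f x - f x0) < e / (C + 1)"
      using f[unfolded cont_iff[OF B]] x0 e' by meson
    show "\<exists>V. openin T V \<and> x0 \<in> V \<and> (\<forall>x\<in>V. A (coord (f x) j - coord (f x0) j) < e)"
    proof (intro exI[of _ V] conjI ballI)
      show "openin T V" "x0 \<in> V" using V by auto
      fix x assume x: "x \<in> V"
      have "A (coord (f x) j - coord (f x0) j) = A (coord (f x - f x0) j)" using coord_diff[OF j] by simp
      also have "\<dots> \<le> C * B (f x - f x0)" using C j by blast
      also have "\<dots> \<le> (C + 1) * B (f x - f x0)"
        using av_nonneg[OF B, of "f x - f x0"] by (simp add: mult_right_mono)
      also have "\<dots> < (C + 1) * (e / (C + 1))"
        using V x C by (intro mult_strict_left_mono) auto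
      also have "\<dots> = e" using C by simp
      finally show "A (coord (f x) j - coord (f x0) j) < e" .
    qed
  qed
qed

lemma cont_sf:
  assumes u: "\<forall>i<n. continuous_map T (abs_topology A) (u i)"
  shows "continuous_map T (abs_topology B) (\<lambda>x. \<Sum>i<n. \<iota> (u i x) * bs i)"
proof (rule cont_sum[OF B])
  show "\<forall>i\<in>{..<n}. continuous_map T (abs_topology B) (\<lambda>x. \<iota> (u i x) * bs i)"
  proof
    fix i assume "i \<in> {..<n}"
    then have "continuous_map T (abs_topology B) (\<lambda>x. bs i * \<iota> (u i x))"
      using u by (intro cont_cmul[OF B] cont_iota) auto
    then show "continuous_map T (abs_topology B) (\<lambda>x. \<iota> (u i x) * bs i)"
      by (simp add: mult.commute)
  qed
qed simp

lemma sf_diff: "(\<Sum>i<n. \<iota> (u i a) * bs i) - (\<Sum>i<n. \<iota> (u i b) * bs i) - (\<Sum>i<n. \<iota> (u i c) * bs i)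
   = (\<Sum>i<n. \<iota> (u i a - u i b - u i c) * bs i)"
proof -
  have "(\<Sum>i<n. \<iota> (u i a - u i b - u i c) * bs i)
      = (\<Sum>i<n. \<iota> (u i a) * bs i - \<iota> (u i b) * bs i - \<iota> (u i c) * bs i)"
    by (intro sum.cong refl) (simp add: idiff left_diff_distrib)
  then show ?thesis by (simp add: sum_subtractf)
qed

lemma QM_coord:
  assumes f: "f \<in> QM G T B" and j: "j < n"
  shows "(\<lambda>x. coord (f x) j) \<in> QM G T A"
proof -
  obtain C where C: "C \<ge> 0" "\<forall>x j. j < n \<longrightarrow> A (coord x j) \<le> C * B x"
    using coord_bound by blast
  obtain D where D: "\<forall>g\<in>carrier G. \<forall>h\<in>carrier G. B (f (g \<otimes>\<^bsub>G\<^esub> h) - f g - f h) \<le> D"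
    using f unfolding QM_def by blast
  have "\<forall>g\<in>carrier G. \<forall>h\<in>carrier G.
     A (coord (f (g \<otimes>\<^bsub>G\<^esub> h)) j - coord (f g) j - coord (f h) j) \<le> C * D"
  proof (intro ballI)
    fix g h assume g: "g \<in> carrier G" and h: "h \<in> carrier G"
    have "A (coord (f (g \<otimes>\<^bsub>G\<^esub> h)) j - coord (f g) j - coord (f h) j)
        = A (coord (f (g \<otimes>\<^bsub>G\<^esub> h) - f g - f h) j)" using coord_diff[OF j] by simp
    also have "\<dots> \<le> C * B (f (g \<otimes>\<^bsub>G\<^esub> h) - f g - f h)" using C j by blast
    also have "\<dots> \<le> C * D" using D g h C by (intro mult_left_mono) auto
    finally show "A (coord (f (g \<otimes>\<^bsub>G\<^esub> h)) j - coord (f g) j - coord (f h) j) \<le> C * D" .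
  qed
  moreover have "continuous_map T (abs_topology A) (\<lambda>x. coord (f x) j)"
    using f j unfolding QM_def by (intro cont_coord) auto
  moreover have "\<forall>x. x \<notin> carrier G \<longrightarrow> coord (f x) j = 0"
    using f j coord_zero unfolding QM_def by auto
  ultimately show ?thesis unfolding QM_def by blast
qed

lemma QM_sf:
  assumes u: "\<forall>i<n. u i \<in> QM G T A"
  shows "(\<lambda>x. \<Sum>i<n. \<iota> (u i x) * bs i) \<in> QM G T B"
proof -
  have "\<forall>i\<in>{..<n}. \<exists>D. \<forall>g\<in>carrier G. \<forall>h\<in>carrier G. A (u i (g \<otimes>\<^bsub>G\<^esub> h) - u i g - u i h) \<le> D"
    using u unfolding QM_def by blast
  from bchoice[OF this] obtain D where D: "\<forall>i\<in>{..<n}. \<forall>g\<in>carrier G. \<forall>h\<in>carrier G. A (u i (g \<otimes>\<^bsub>G\<^esub> h) - u i g - u i h) \<le> D i"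
    by blast
  have "\<forall>g\<in>carrier G. \<forall>h\<in>carrier G.
     B ((\<Sum>i<n. \<iota> (u i (g \<otimes>\<^bsub>G\<^esub> h)) * bs i) - (\<Sum>i<n. \<iota> (u i g) * bs i) - (\<Sum>i<n. \<iota> (u i h) * bs i))
       \<le> (\<Sum>i<n. D i * B (bs i))"
  proof (intro ballI)
    fix g h assume g: "g \<in> carrier G" and h: "h \<in> carrier G"
    have "B ((\<Sum>i<n. \<iota> (u i (g \<otimes>\<^bsub>G\<^esub> h)) * bs i) - (\<Sum>i<n. \<iota> (u i g) * bs i) - (\<Sum>i<n. \<iota> (u i h) * bs i))
       = B (\<Sum>i<n. \<iota> (u i (g \<otimes>\<^bsub>G\<^esub> h) - u i g - u i h) * bs i)" by (simp only: sf_diff)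
    also have "\<dots> \<le> (\<Sum>i<n. A (u i (g \<otimes>\<^bsub>G\<^esub> h) - u i g - u i h) * B (bs i))" by (rule upper)
    also have "\<dots> \<le> (\<Sum>i<n. D i * B (bs i))"
      using D g h by (intro sum_mono mult_right_mono) (auto simp: av_nonneg[OF B])
    finally show "B ((\<Sum>i<n. \<iota> (u i (g \<otimes>\<^bsub>G\<^esub> h)) * bs i) - (\<Sum>i<n. \<iota> (u i g) * bs i) - (\<Sum>i<n. \<iota> (u i h) * bs i))
       \<le> (\<Sum>i<n. D i * B (bs i))" .
  qed
  moreover have "continuous_map T (abs_topology B) (\<lambda>x. \<Sum>i<n. \<iota> (u i x) * bs i)"
    using u unfolding QM_def by (intro cont_sf) auto
  moreover have "\<forall>x. x \<notin> carrier G \<longrightarrow> (\<Sum>i<n. \<iota> (u i x) * bs i) = 0"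
    using u unfolding QM_def by auto
  ultimately show ?thesis unfolding QM_def by blast
qed

lemma HOMc_coord:
  assumes f: "f \<in> HOMc G T B" and j: "j < n"
  shows "(\<lambda>x. coord (f x) j) \<in> HOMc G T A"
proof -
  have "continuous_map T (abs_topology A) (\<lambda>x. coord (f x) j)"
    using f j unfolding HOMc_def by (intro cont_coord) auto
  then show ?thesis using f j coord_zero coord_add[OF j] unfolding HOMc_def by auto
qed

lemma HOMc_sf:
  assumes u: "\<forall>i<n. u i \<in> HOMc G T A"
  shows "(\<lambda>x. \<Sum>i<n. \<iota> (u i x) * bs i) \<in> HOMc G T B"
proof -
  have "continuous_map T (abs_topology B) (\<lambda>x. \<Sum>i<n. \<iota> (u i x) * bs i)"
    using u unfolding HOMc_def by (intro cont_sf) auto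
  moreover have "\<forall>g\<in>carrier G. \<forall>h\<in>carrier G. (\<Sum>i<n. \<iota> (u i (g \<otimes>\<^bsub>G\<^esub> h)) * bs i)
      = (\<Sum>i<n. \<iota> (u i g) * bs i) + (\<Sum>i<n. \<iota> (u i h) * bs i)"
  proof (intro ballI)
    fix g h assume g: "g \<in> carrier G" and h: "h \<in> carrier G"
    have "(\<Sum>i<n. \<iota> (u i (g \<otimes>\<^bsub>G\<^esub> h)) * bs i) = (\<Sum>i<n. \<iota> (u i g + u i h) * bs i)"
      using u g h unfolding HOMc_def by (intro sum.cong) auto
    also have "\<dots> = (\<Sum>i<n. \<iota> (u i g) * bs i) + (\<Sum>i<n. \<iota> (u i h) * bs i)"
      by (simp add: iadd sum.distrib distrib_right)
    finally show "(\<Sum>i<n. \<iota> (u i (g \<otimes>\<^bsub>G\<^esub> h)) * bs i)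
      = (\<Sum>i<n. \<iota> (u i g) * bs i) + (\<Sum>i<n. \<iota> (u i h) * bs i)" .
  qed
  moreover have "\<forall>x. x \<notin> carrier G \<longrightarrow> (\<Sum>i<n. \<iota> (u i x) * bs i) = 0"
    using u unfolding HOMc_def by auto
  ultimately show ?thesis unfolding HOMc_def by blast
qed

lemma CB_coord:
  assumes f: "f \<in> CB G T B" and j: "j < n"
  shows "(\<lambda>x. coord (f x) j) \<in> CB G T A"
proof -
  obtain C where C: "C \<ge> 0" "\<forall>x j. j < n \<longrightarrow> A (coord x j) \<le> C * B x"
    using coord_bound by blast
  obtain D where D: "\<forall>g\<in>carrier G. B (f g) \<le> D" using f unfolding CB_def by blast
  have "\<forall>g\<in>carrier G. A (coord (f g) j) \<le> C * D"
  proof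
    fix g assume g: "g \<in> carrier G"
    have "A (coord (f g) j) \<le> C * B (f g)" using C j by blast
    also have "\<dots> \<le> C * D" using D g C by (intro mult_left_mono) auto
    finally show "A (coord (f g) j) \<le> C * D" .
  qed
  moreover have "continuous_map T (abs_topology A) (\<lambda>x. coord (f x) j)"
    using f j unfolding CB_def by (intro cont_coord) auto
  moreover have "\<forall>x. x \<notin> carrier G \<longrightarrow> coord (f x) j = 0"
    using f j coord_zero unfolding CB_def by auto
  ultimately show ?thesis unfolding CB_def by blast
qed

lemma CB_sf:
  assumes u: "\<forall>i<n. u i \<in> CB G T A"
  shows "(\<lambda>x. \<Sum>i<n. \<iota> (u i x) * bs i) \<in> CB G T B"
proof -
  have "\<forall>i\<in>{..<n}. \<exists>D. \<forall>g\<in>carrier G. A (u i g) \<le> D"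
    using u unfolding CB_def by blast
  from bchoice[OF this] obtain D where D: "\<forall>i\<in>{..<n}. \<forall>g\<in>carrier G. A (u i g) \<le> D i" by blast
  have "\<forall>g\<in>carrier G. B (\<Sum>i<n. \<iota> (u i g) * bs i) \<le> (\<Sum>i<n. D i * B (bs i))"
  proof
    fix g assume g: "g \<in> carrier G"
    have "B (\<Sum>i<n. \<iota> (u i g) * bs i) \<le> (\<Sum>i<n. A (u i g) * B (bs i))" by (rule upper)
    also have "\<dots> \<le> (\<Sum>i<n. D i * B (bs i))"
      using D g by (intro sum_mono mult_right_mono) (auto simp: av_nonneg[OF B])
    finally show "B (\<Sum>i<n. \<iota> (u i g) * bs i) \<le> (\<Sum>i<n. D i * B (bs i))" .
  qed
  moreover have "continuous_map T (abs_topology B) (\<lambda>x. \<Sum>i<n. \<iota> (u i x) * bs i)"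
    using u unfolding CB_def by (intro cont_sf) auto
  moreover have "\<forall>x. x \<notin> carrier G \<longrightarrow> (\<Sum>i<n. \<iota> (u i x) * bs i) = 0"
    using u unfolding CB_def by auto
  ultimately show ?thesis unfolding CB_def by blast
qed

lemma HB_coord:
  assumes f: "f \<in> HB G T B" and j: "j < n"
  shows "(\<lambda>x. coord (f x) j) \<in> HB G T A"
proof -
  obtain h b where hb: "f = (\<lambda>x. h x + b x)" "h \<in> HOMc G T B" "b \<in> CB G T B"
    using f unfolding HB_def by blast
  have "(\<lambda>x. coord (f x) j) = (\<lambda>x. coord (h x) j + coord (b x) j)"
    using hb(1) coord_add[OF j] by simp
  then show ?thesis using HB_I[OF HOMc_coord[OF hb(2) j] CB_coord[OF hb(3) j]] by simp
qed

lemma HB_sf: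
  assumes u: "\<forall>i<n. u i \<in> HB G T A"
  shows "(\<lambda>x. \<Sum>i<n. \<iota> (u i x) * bs i) \<in> HB G T B"
proof -
  have "\<forall>i\<in>{..<n}. \<exists>p. u i = (\<lambda>x. fst p x + snd p x) \<and> fst p \<in> HOMc G T A \<and> snd p \<in> CB G T A"
  proof
    fix i assume "i \<in> {..<n}"
    then have "u i \<in> HB G T A" using u by simp
    then obtain h b where hb: "u i = (\<lambda>x. h x + b x)" "h \<in> HOMc G T A" "b \<in> CB G T A"
      unfolding HB_def by blast
    show "\<exists>p. u i = (\<lambda>x. fst p x + snd p x) \<and> fst p \<in> HOMc G T A \<and> snd p \<in> CB G T A"
      by (rule exI[of _ "(h, b)"]) (simp add: hb)
  qed
  from bchoice[OF this] obtain hb where hb: "\<forall>i\<in>{..<n}. u i = (\<lambda>x. fst (hb i) x + snd (hb i) x) \<and> fst (hb i) \<in> HOMc G T A \<and> snd (hb i) \<in> CB G T A"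
    by blast
  have eq: "(\<lambda>x. \<Sum>i<n. \<iota> (u i x) * bs i)
     = (\<lambda>x. (\<Sum>i<n. \<iota> (fst (hb i) x) * bs i) + (\<Sum>i<n. \<iota> (snd (hb i) x) * bs i))"
  proof
    fix x
    have "(\<Sum>i<n. \<iota> (u i x) * bs i) = (\<Sum>i<n. \<iota> (fst (hb i) x + snd (hb i) x) * bs i)"
      using hb by (intro sum.cong) auto
    also have "\<dots> = (\<Sum>i<n. \<iota> (fst (hb i) x) * bs i) + (\<Sum>i<n. \<iota> (snd (hb i) x) * bs i)"
      by (simp add: iadd sum.distrib distrib_right)
    finally show "(\<Sum>i<n. \<iota> (u i x) * bs i) = (\<Sum>i<n. \<iota> (fst (hb i) x) * bs i) + (\<Sum>i<n. \<iota> (snd (hb i) x) * bs i)" .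
  qed
  have h: "(\<lambda>x. \<Sum>i<n. \<iota> (fst (hb i) x) * bs i) \<in> HOMc G T B"
    using hb by (intro HOMc_sf) auto
  have b: "(\<lambda>x. \<Sum>i<n. \<iota> (snd (hb i) x) * bs i) \<in> CB G T B"
    using hb by (intro CB_sf) auto
  show ?thesis unfolding eq by (rule HB_I[OF h b])
qed

lemma rep_fun: "(\<lambda>x. \<Sum>i<n. \<iota> (coord (f x) i) * bs i) = f"
  by (simp add: coord_rep)

lemma HB_from_coords:
  assumes "\<forall>i<n. (\<lambda>x. coord (f x) i) \<in> HB G T A"
  shows "f \<in> HB G T B"
  using HB_sf[of "\<lambda>i x. coord (f x) i"] assms rep_fun[of f] by simp

lemma coord_sf: "j < n \<Longrightarrow> (\<lambda>x. coord (\<Sum>i<n. \<iota> (u i x) * bs i) j) = u j"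
  using coord_of_sum by auto

lemma n_pos: "n > 0"
proof (rule ccontr)
  assume "\<not> n > 0"
  then have "n = 0" by simp
  obtain c where "(1::'k) = (\<Sum>i<n. \<iota> (c i) * bs i)" using basis[of 1] by blast
  then show False using \<open>n = 0\<close> by simp
qed

definition Phi :: "('g, 'b) monoid_scheme \<Rightarrow> 'g topology \<Rightarrow> ('g \<Rightarrow> 'k) set \<Rightarrow> nat \<Rightarrow> ('g \<Rightarrow> 'q) set" where
  "Phi G T X = (\<lambda>i\<in>{..<n}. EHcls G T A (\<lambda>x. coord ((SOME f. f \<in> QM G T B \<and> X = EHcls G T B f) x) i))"

lemma Phi_eq:
  assumes f: "f \<in> QM G T B"
  shows "Phi G T (EHcls G T B f) = (\<lambda>i\<in>{..<n}. EHcls G T A (\<lambda>x. coord (f x) i))"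
proof -
  define f' where "f' = (SOME f'. f' \<in> QM G T B \<and> EHcls G T B f = EHcls G T B f')"
  have f': "f' \<in> QM G T B \<and> EHcls G T B f = EHcls G T B f'"
    unfolding f'_def by (rule someI[of _ f]) (use f in simp)
  then have d: "(\<lambda>x. f' x - f x) \<in> HB G T B" using cls_eq_iff[OF B f] by blast
  have "EHcls G T A (\<lambda>x. coord (f' x) i) = EHcls G T A (\<lambda>x. coord (f x) i)" if i: "i < n" for i
  proof -
    have h: "(\<lambda>x. coord (f' x - f x) i) \<in> HB G T A" by (rule HB_coord[OF d i])
    have e: "(\<lambda>x. coord (f x) i - coord (f' x) i) = (\<lambda>x. -1 * coord (f' x - f x) i + 0)"
      using coord_diff[OF i] by simp
    have "(\<lambda>x. coord (f x) i - coord (f' x) i) \<in> HB G T A"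
      unfolding e by (rule HB_lin[OF A h HB_zero])
    then show ?thesis using cls_eq_iff[OF A QM_coord[OF f' [THEN conjunct1] i] QM_coord[OF f i]] by blast
  qed
  then show ?thesis unfolding Phi_def f'_def[symmetric] by (intro restrict_ext) auto
qed

end



context extctx
begin

lemma main:
  shows "(\<exists>\<Phi>. bij_betw \<Phi> (EH2cb G T B) ({..<n} \<rightarrow>\<^sub>E EH2cb G T A)
           \<and> (\<forall>f\<in>QM G T B. \<forall>g\<in>QM G T B. \<forall>c. \<forall>u v.
                (\<forall>i<n. u i \<in> \<Phi> (EHcls G T B f) i \<and> v i \<in> \<Phi> (EHcls G T B g) i) \<longrightarrow>
                (\<forall>i<n. (\<lambda>x. c * u i x + v i x)
                        \<in> \<Phi> (EHcls G T B (\<lambda>x. \<iota> c * f x + g x)) i)))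
       \<and> (EH2cb G T B = {EHcls G T B (\<lambda>_. 0)} \<longleftrightarrow> EH2cb G T A = {EHcls G T A (\<lambda>_. 0)})"
proof -
  let ?P = "Phi G T"
  have inj: "inj_on ?P (EH2cb G T B)"
  proof (rule inj_onI)
    fix X Y assume X: "X \<in> EH2cb G T B" and Y: "Y \<in> EH2cb G T B" and eq: "?P X = ?P Y"
    obtain f where f: "f \<in> QM G T B" "X = EHcls G T B f" using X unfolding EH2cb_def by blast
    obtain g where g: "g \<in> QM G T B" "Y = EHcls G T B g" using Y unfolding EH2cb_def by blast
    have "\<forall>i<n. (\<lambda>x. coord (g x - f x) i) \<in> HB G T A"
    proof (intro allI impI)
      fix i assume i: "i < n"
      have "?P X i = ?P Y i" using eq by simp
      then have "EHcls G T A (\<lambda>x. coord (f x) i) = EHcls G T A (\<lambda>x. coord (g x) i)"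
        using Phi_eq[OF f(1)] Phi_eq[OF g(1)] f(2) g(2) i by simp
      then have "(\<lambda>x. coord (g x) i - coord (f x) i) \<in> HB G T A"
        using cls_eq_iff[OF A QM_coord[OF f(1) i] QM_coord[OF g(1) i]] by blast
      then show "(\<lambda>x. coord (g x - f x) i) \<in> HB G T A" using coord_diff[OF i] by simp
    qed
    then have "(\<lambda>x. g x - f x) \<in> HB G T B" by (rule HB_from_coords)
    then show "X = Y" using cls_eq_iff[OF B f(1) g(1)] f(2) g(2) by simp
  qed
  have img: "?P ` EH2cb G T B = {..<n} \<rightarrow>\<^sub>E EH2cb G T A"
  proof (intro Set.set_eqI iffI)
    fix Y assume "Y \<in> ?P ` EH2cb G T B"
    then obtain f where f: "f \<in> QM G T B" "Y = ?P (EHcls G T B f)" unfolding EH2cb_def by blast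
    then show "Y \<in> {..<n} \<rightarrow>\<^sub>E EH2cb G T A"
      using Phi_eq[OF f(1)] QM_coord[OF f(1)] unfolding EH2cb_def by auto
  next
    fix Y assume Y: "Y \<in> {..<n} \<rightarrow>\<^sub>E EH2cb G T A"
    have "\<forall>i\<in>{..<n}. \<exists>u. u \<in> QM G T A \<and> Y i = EHcls G T A u"
      using Y unfolding EH2cb_def by (auto simp: PiE_iff)
    then obtain u where u: "\<forall>i\<in>{..<n}. u i \<in> QM G T A \<and> Y i = EHcls G T A (u i)"
      using bchoice[of "{..<n}" "\<lambda>i u. u \<in> QM G T A \<and> Y i = EHcls G T A u"] by blast
    define f where "f = (\<lambda>x. \<Sum>i<n. \<iota> (u i x) * bs i)"
    have f: "f \<in> QM G T B" unfolding f_def using u by (intro QM_sf) auto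
    have "?P (EHcls G T B f) = (\<lambda>i\<in>{..<n}. EHcls G T A (\<lambda>x. coord (f x) i))" by (rule Phi_eq[OF f])
    also have "\<dots> = (\<lambda>i\<in>{..<n}. EHcls G T A (u i))"
      unfolding f_def by (intro restrict_ext) (simp add: coord_sf)
    also have "\<dots> = Y"
      by (rule extensionalityI[where A="{..<n}"]) (use Y u in \<open>auto simp: PiE_iff\<close>)
    finally have "Y = ?P (EHcls G T B f)" by simp
    then show "Y \<in> ?P ` EH2cb G T B" using f unfolding EH2cb_def by blast
  qed
  have lin: "\<forall>f\<in>QM G T B. \<forall>g\<in>QM G T B. \<forall>c. \<forall>u v.
                (\<forall>i<n. u i \<in> ?P (EHcls G T B f) i \<and> v i \<in> ?P (EHcls G T B g) i) \<longrightarrow>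
                (\<forall>i<n. (\<lambda>x. c * u i x + v i x) \<in> ?P (EHcls G T B (\<lambda>x. \<iota> c * f x + g x)) i)"
  proof (intro ballI allI impI)
    fix f g c u v i assume f: "f \<in> QM G T B" and g: "g \<in> QM G T B"
      and uv: "\<forall>i<n. u i \<in> ?P (EHcls G T B f) i \<and> v i \<in> ?P (EHcls G T B g) i" and i: "i < n"
    have fg: "(\<lambda>x. \<iota> c * f x + g x) \<in> QM G T B" by (rule QM_lin[OF B f g])
    have u: "u i \<in> QM G T A" "(\<lambda>x. u i x - coord (f x) i) \<in> HB G T A"
      using uv i Phi_eq[OF f] unfolding EHcls_def by auto
    have v: "v i \<in> QM G T A" "(\<lambda>x. v i x - coord (g x) i) \<in> HB G T A"
      using uv i Phi_eq[OF g] unfolding EHcls_def by auto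
    have q: "(\<lambda>x. c * u i x + v i x) \<in> QM G T A" by (rule QM_lin[OF A u(1) v(1)])
    have hbm: "(\<lambda>x. c * (u i x - coord (f x) i) + (v i x - coord (g x) i)) \<in> HB G T A"
      by (rule HB_lin[OF A u(2) v(2)])
    have cl: "\<And>x. coord (\<iota> c * f x + g x) i = c * coord (f x) i + coord (g x) i"
      using coord_lin[OF i] by blast
    have eqf: "(\<lambda>x. (c * u i x + v i x) - coord (\<iota> c * f x + g x) i)
        = (\<lambda>x. c * (u i x - coord (f x) i) + (v i x - coord (g x) i))"
      unfolding cl by (simp add: algebra_simps)
    have "(\<lambda>x. (c * u i x + v i x) - coord (\<iota> c * f x + g x) i) \<in> HB G T A"
      unfolding eqf by (rule hbm)
    then show "(\<lambda>x. c * u i x + v i x) \<in> ?P (EHcls G T B (\<lambda>x. \<iota> c * f x + g x)) i"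
      using Phi_eq[OF fg] i q unfolding EHcls_def by simp
  qed
  have P0: "?P (EHcls G T B (\<lambda>_. 0)) = (\<lambda>i\<in>{..<n}. EHcls G T A (\<lambda>_. 0))"
    unfolding Phi_eq[OF QM_zero[OF B]] by (intro restrict_ext) (simp add: coord_zero)
  have z: "EHcls G T B (\<lambda>_. 0) \<in> EH2cb G T B"
    unfolding EH2cb_def by (rule imageI[OF QM_zero[OF B]])
  have zA: "EHcls G T A (\<lambda>_. 0) \<in> EH2cb G T A"
    unfolding EH2cb_def by (rule imageI[OF QM_zero[OF A]])
  have triv: "EH2cb G T B = {EHcls G T B (\<lambda>_. 0)} \<longleftrightarrow> EH2cb G T A = {EHcls G T A (\<lambda>_. 0)}"
  proof
    assume H: "EH2cb G T B = {EHcls G T B (\<lambda>_. 0)}"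
    show "EH2cb G T A = {EHcls G T A (\<lambda>_. 0)}"
    proof (intro Set.set_eqI iffI)
      fix y assume y: "y \<in> EH2cb G T A"
      have "(\<lambda>i\<in>{..<n}. y) \<in> {..<n} \<rightarrow>\<^sub>E EH2cb G T A" using y by simp
      then have "(\<lambda>i\<in>{..<n}. y) \<in> ?P ` EH2cb G T B" using img by simp
      then have "(\<lambda>i\<in>{..<n}. y) = (\<lambda>i\<in>{..<n}. EHcls G T A (\<lambda>_. 0))" using H P0 by simp
      then have "(\<lambda>i\<in>{..<n}. y) 0 = (\<lambda>i\<in>{..<n}. EHcls G T A (\<lambda>_. 0)) 0" by simp
      then have "y = EHcls G T A (\<lambda>_. 0)" using n_pos by simp
      then show "y \<in> {EHcls G T A (\<lambda>_. 0)}" by simp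
    next
      fix y assume "y \<in> {EHcls G T A (\<lambda>_. 0)}"
      then show "y \<in> EH2cb G T A" using zA by simp
    qed
  next
    assume H: "EH2cb G T A = {EHcls G T A (\<lambda>_. 0)}"
    show "EH2cb G T B = {EHcls G T B (\<lambda>_. 0)}"
    proof (intro Set.set_eqI iffI)
      fix X assume X: "X \<in> EH2cb G T B"
      have "?P X \<in> {..<n} \<rightarrow>\<^sub>E EH2cb G T A" unfolding img[symmetric] by (rule imageI[OF X])
      then have PX: "?P X \<in> {..<n} \<rightarrow>\<^sub>E {EHcls G T A (\<lambda>_. 0)}" unfolding H .
      have "?P X = (\<lambda>i\<in>{..<n}. EHcls G T A (\<lambda>_. 0))"
        by (rule extensionalityI[where A="{..<n}"]) (use PX in \<open>auto simp: PiE_iff\<close>)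
      then have "?P X = ?P (EHcls G T B (\<lambda>_. 0))" using P0 by simp
      then have "X = EHcls G T B (\<lambda>_. 0)" by (rule inj_onD[OF inj _ X z])
      then show "X \<in> {EHcls G T B (\<lambda>_. 0)}" by simp
    next
      fix X assume "X \<in> {EHcls G T B (\<lambda>_. 0)}"
      then show "X \<in> EH2cb G T B" using z by simp
    qed
  qed
  show ?thesis using inj img lin triv unfolding bij_betw_def by blast
qed

end

theorem corollary9p38:
  fixes p n :: nat
    and absQ :: "'q::field_char_0 \<Rightarrow> real"
    and absK :: "'k::field \<Rightarrow> real"
    and \<iota> :: "'q \<Rightarrow> 'k"
    and G :: "('g, 'b) monoid_scheme" and T :: "'g topology"
  assumes "prime p"
    and Qp: "is_Qp p absQ"
    and hom: "\<forall>a b. \<iota> (a + b) = \<iota> a + \<iota> b" "\<forall>a b. \<iota> (a * b) = \<iota> a * \<iota> b" "\<iota> 1 = 1"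
    and degree: "\<exists>bs :: nat \<Rightarrow> 'k. \<forall>x. \<exists>!c. c \<in> {..<n} \<rightarrow>\<^sub>E UNIV \<and> x = (\<Sum>i<n. \<iota> (c i) * bs i)"
    and absK: "absval absK" "\<forall>c. absK (\<iota> c) = absQ c"
    and TG: "topological_group G T"
  shows "(\<exists>\<Phi>. bij_betw \<Phi> (EH2cb G T absK) ({..<n} \<rightarrow>\<^sub>E EH2cb G T absQ)
           \<and> (\<forall>f\<in>QM G T absK. \<forall>g\<in>QM G T absK. \<forall>c. \<forall>u v.
                (\<forall>i<n. u i \<in> \<Phi> (EHcls G T absK f) i \<and> v i \<in> \<Phi> (EHcls G T absK g) i) \<longrightarrow>
                (\<forall>i<n. (\<lambda>x. c * u i x + v i x)
                        \<in> \<Phi> (EHcls G T absK (\<lambda>x. \<iota> c * f x + g x)) i)))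
       \<and> (EH2cb G T absK = {EHcls G T absK (\<lambda>_. 0)} \<longleftrightarrow> EH2cb G T absQ = {EHcls G T absQ (\<lambda>_. 0)})"
proof -
  obtain bs :: "nat \<Rightarrow> 'k" where bs: "\<forall>x. \<exists>!c. c \<in> {..<n} \<rightarrow>\<^sub>E UNIV \<and> x = (\<Sum>i<n. \<iota> (c i) * bs i)"
    using degree by blast
  have aQ: "absval absQ" using Qp unfolding is_Qp_def by blast
  have compl: "\<forall>X::nat \<Rightarrow> 'q. (\<forall>e>0. \<exists>N. \<forall>m\<ge>N. \<forall>k\<ge>N. absQ (X m - X k) < e)
           \<longrightarrow> (\<exists>L. \<forall>e>0. \<exists>N. \<forall>m\<ge>N. absQ (X m - L) < e)" using Qp unfolding is_Qp_def by blast
  have "extctx absQ absK \<iota> bs n"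
    unfolding extctx_def using hom absK bs aQ compl by blast
  then interpret E: extctx absQ absK \<iota> bs n .
  show ?thesis by (rule E.main)
qed

end
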